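(* Let $L$ be a virtual link. Then $L$ is graphical if and only if $L$ is checkerboard colorable.
   Context: A virtual link diagram is a generic immersion of a closed 1-manifold in $\mathbb{R}^2$ whose double points are either real (classical) crossings, with over/under information, or virtual crossings (marked by a small circle); a virtual link is an equivalence class of virtual link diagrams under the generalized Reidemeister moves (classical Reidemeister moves I–III, their purely virtual analogues, and the mixed move in which a strand with only virtual crossings passes over/through a real crossing). A cyclic graph is a finite graph together with a cyclic ordering of the half-edges at each vertex (equivalently, a graph cellularly embedded in a closed orientable surface, or an orientable ribbon graph); a signed cyclic graph additionally has each edge labelled $+$ or $-$. Given a signed cyclic graph $G$, view it as cellularly embedded in a closed oriented surface and perform the medial construction: place a crossing at the midpoint of each edge $e$ and join the crossings around each face, obtaining a link diagram on the surface; the crossing at $e$ is chosen so that, if $e$ is positive, its $B$-smoothing is the one that separates the two sides along $e$ (following the boundaries of the endpoints of $e$) and its $A$-smoothing is the one that connects across $e$; for a negative edge the roles of $A$ and $B$ are exchanged (here $A$- and $B$-smoothings are Kauffman's standard ones). Immersing the surface diagram generically in the plane, with artefacts of the immersion marked as virtual crossings, gives a virtual link diagram; all such diagrams (for all immersions) are called the virtual link diagrams associated with $G$, and they all represent the same virtual link. A virtual link is graphical if it is represented by a virtual link diagram associated with some signed cyclic graph. A virtual link diagram is checkerboard colorable if one can color a small neighbourhood of one side of each arc so that near each real crossing the colored sides alternate around the crossing, and near each virtual crossing the colorings of the two strands pass through independently. A virtual link is checkerboard colorable if it has a checkerboard colorable diagram. *)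

theory Defs
  imports Main
begin

text \<open>
A virtual link diagram modulo planar isotopy and the purely virtual and mixed moves
is encoded by its abstract diagram: a finite set of real crossings (4-valent
vertices) and of beads (2-valent subdivision points of arcs; a crossingless circle
component is a bead whose two ends are joined), together with a fixed-point free
involution mate on the ends joining them into arcs.  The ends of a crossing v are
(v,0),(v,1),(v,2),(v,3), listed in counterclockwise order around the crossing
(orientation of the supporting surface), and the over-strand joins (v,0) and (v,2),
the under-strand joins (v,1) and (v,3).
\<close>

record 'v diagram =
  xings :: "'v set"
  beads :: "'v set"
  mate  :: "'v \<times> nat \<Rightarrow> 'v \<times> nat"

definition ends :: "'v diagram \<Rightarrow> ('v \<times> nat) set" where
  "ends D = {(v,i). (v \<in> xings D \<and> i < 4) \<or> (v \<in> beads D \<and> i < 2)}"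

definition wf_diagram :: "'v diagram \<Rightarrow> bool" where
  "wf_diagram D \<longleftrightarrow> finite (xings D) \<and> finite (beads D) \<and> xings D \<inter> beads D = {} \<and>
     (\<forall>e\<in>ends D. mate D e \<in> ends D \<and> mate D e \<noteq> e \<and> mate D (mate D e) = e)"

text \<open>Isomorphism of diagrams: relabelling of vertices, rotation of a crossing by a
half turn (which preserves the over-strand), and flipping of beads.\<close>

definition end_map :: "'v diagram \<Rightarrow> ('v \<Rightarrow> 'w) \<Rightarrow> ('v \<Rightarrow> nat) \<Rightarrow> 'v \<times> nat \<Rightarrow> 'w \<times> nat" where
  "end_map D f r e = (if fst e \<in> xings D then (f (fst e), (snd e + r (fst e)) mod 4)
                      else (f (fst e), (snd e + r (fst e)) mod 2))"

definition diag_iso :: "'v diagram \<Rightarrow> 'w diagram \<Rightarrow> bool" where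
  "diag_iso D1 D2 \<longleftrightarrow> (\<exists>f r. bij_betw f (xings D1) (xings D2) \<and> bij_betw f (beads D1) (beads D2) \<and>
      (\<forall>v\<in>xings D1. r v \<in> {0,2}) \<and> (\<forall>v\<in>beads D1. r v \<in> {0,1}) \<and>
      (\<forall>e\<in>ends D1. mate D2 (end_map D1 f r e) = end_map D1 f r (mate D1 e)))"

definition bead_add :: "'v diagram \<Rightarrow> 'v diagram \<Rightarrow> bool" where
  "bead_add D D' \<longleftrightarrow> (\<exists>b p. b \<notin> xings D \<union> beads D \<and> p \<in> ends D \<and>
      xings D' = xings D \<and> beads D' = insert b (beads D) \<and>
      mate D' p = (b,0) \<and> mate D' (b,0) = p \<and>
      mate D' (b,1) = mate D p \<and> mate D' (mate D p) = (b,1) \<and>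
      (\<forall>e\<in>ends D. e \<noteq> p \<and> e \<noteq> mate D p \<longrightarrow> mate D' e = mate D e))"

text \<open>Local replacement: the beads Bs (each marking a small piece of arc) are removed
and replaced by a tangle on the fresh crossings Xs; sg sends each bead end to the
tangle end that takes over its connection to the outside, and I gives the internal
connections of the tangle on the remaining tangle ends.\<close>

definition subst_rel :: "'v diagram \<Rightarrow> 'v set \<Rightarrow> 'v set \<Rightarrow> ('v \<times> nat \<Rightarrow> 'v \<times> nat)
     \<Rightarrow> ('v \<times> nat \<Rightarrow> 'v \<times> nat) \<Rightarrow> 'v diagram \<Rightarrow> bool" where
  "subst_rel D Bs Xs sg I D' \<longleftrightarrow>
     (let sub = (\<lambda>e. if fst e \<in> Bs then sg e else e) in
      Bs \<subseteq> beads D \<and> Xs \<inter> (xings D \<union> beads D) = {} \<and>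
      xings D' = xings D \<union> Xs \<and> beads D' = beads D - Bs \<and>
      (\<forall>e\<in>ends D. fst e \<notin> Bs \<longrightarrow> mate D' e = sub (mate D e)) \<and>
      (\<forall>e\<in>ends D. fst e \<in> Bs \<longrightarrow> mate D' (sg e) = sub (mate D e)) \<and>
      (\<forall>e\<in>(Xs \<times> {..<4}) - sg ` {e\<in>ends D. fst e \<in> Bs}. mate D' e = I e))"

text \<open>Reidemeister I: a kink (a loop joining two consecutive ends of a crossing).\<close>

definition reid1 :: "'v diagram \<Rightarrow> 'v diagram \<Rightarrow> bool" where
  "reid1 D D' \<longleftrightarrow> (\<exists>b c i. b \<in> beads D \<and> i < 4 \<and>
     subst_rel D {b} {c}
       (\<lambda>e. if e = (b,0) then (c, (i+2) mod 4) else if e = (b,1) then (c, (i+3) mod 4) else e)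
       (\<lambda>e. if e = (c,i) then (c, (i+1) mod 4) else if e = (c, (i+1) mod 4) then (c,i) else e)
       D')"

text \<open>Reidemeister II: strand A (bead b1) passes over strand B (bead b2) at crossings
c and d, creating a bigon.\<close>

definition reid2 :: "'v diagram \<Rightarrow> 'v diagram \<Rightarrow> bool" where
  "reid2 D D' \<longleftrightarrow> (\<exists>b1 b2 c d. b1 \<noteq> b2 \<and> c \<noteq> d \<and>
     subst_rel D {b1,b2} {c,d}
       (\<lambda>e. if e = (b1,0) then (c,0) else if e = (b1,1) then (d,2)
            else if e = (b2,0) then (c,3) else if e = (b2,1) then (d,3) else e)
       (\<lambda>e. if e = (c,2) then (d,0) else if e = (d,0) then (c,2)
            else if e = (c,1) then (d,1) else if e = (d,1) then (c,1) else e)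
       D')"

text \<open>Reidemeister III: top strand (bead bT), middle strand (bM), bottom strand (bB);
the two sides of the move are the two triangle tangles with the same six
external ends (in the same cyclic order).\<close>

definition reid3 :: "'v diagram \<Rightarrow> 'v diagram \<Rightarrow> bool" where
  "reid3 D1 D2 \<longleftrightarrow> (\<exists>D0 bT bM bB x y z x' y' z'.
     wf_diagram D0 \<and> distinct [bT,bM,bB] \<and> distinct [x,y,z] \<and> distinct [x',y',z'] \<and>
     subst_rel D0 {bT,bM,bB} {x,y,z}
       (\<lambda>e. if e = (bT,0) then (x,0) else if e = (bT,1) then (y,2)
            else if e = (bM,0) then (x,3) else if e = (bM,1) then (z,2)
            else if e = (bB,0) then (y,3) else if e = (bB,1) then (z,1) else e)
       (\<lambda>e. if e = (x,2) then (y,0) else if e = (y,0) then (x,2)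
            else if e = (x,1) then (z,0) else if e = (z,0) then (x,1)
            else if e = (y,1) then (z,3) else if e = (z,3) then (y,1) else e)
       D1 \<and>
     subst_rel D0 {bT,bM,bB} {x',y',z'}
       (\<lambda>e. if e = (bT,0) then (y',0) else if e = (bT,1) then (x',2)
            else if e = (bM,0) then (z',0) else if e = (bM,1) then (x',1)
            else if e = (bB,0) then (z',3) else if e = (bB,1) then (y',1) else e)
       (\<lambda>e. if e = (y',2) then (x',0) else if e = (x',0) then (y',2)
            else if e = (z',2) then (x',3) else if e = (x',3) then (z',2)
            else if e = (z',1) then (y',3) else if e = (y',3) then (z',1) else e)
       D2)"

definition vstep :: "'v diagram \<Rightarrow> 'v diagram \<Rightarrow> bool" where
  "vstep D D' \<longleftrightarrow> wf_diagram D \<and> wf_diagram D' \<and>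
     (diag_iso D D' \<or> bead_add D D' \<or> reid1 D D' \<or> reid2 D D' \<or> reid3 D D')"

definition vequiv :: "'v diagram \<Rightarrow> 'v diagram \<Rightarrow> bool" where
  "vequiv = equivclp vstep"

text \<open>The end e stands for the side of the arc at e that is traversed when running
along the arc towards e and turning counterclockwise at its vertex; its partner
mate e stands for the other side.  C is the set of coloured sides: exactly one side
of every arc, coloured sides alternating around each real crossing, and colours
passing straight through beads (virtual crossings).\<close>

definition cb_coloring :: "'v diagram \<Rightarrow> ('v \<times> nat) set \<Rightarrow> bool" where
  "cb_coloring D C \<longleftrightarrow> C \<subseteq> ends D \<and>
     (\<forall>e\<in>ends D. e \<in> C \<longleftrightarrow> mate D e \<notin> C) \<and>
     (\<forall>v\<in>xings D. (\<forall>i<4. (v,i) \<in> C \<longleftrightarrow> even i) \<or> (\<forall>i<4. (v,i) \<in> C \<longleftrightarrow> odd i)) \<and>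
     (\<forall>v\<in>beads D. (v,0) \<in> C \<longleftrightarrow> (v,1) \<notin> C)"

definition cb_colorable :: "'v diagram \<Rightarrow> bool" where
  "cb_colorable D \<longleftrightarrow> (\<exists>C. cb_coloring D C)"

text \<open>Half-edge model: hes = half-edges, eswap = the other half of the same edge,
rot = next half-edge in the cyclic order at its vertex (vertices = rot-orbits),
pos = sign of the edge.\<close>

record 'h scgraph =
  hes   :: "'h set"
  eswap :: "'h \<Rightarrow> 'h"
  rot   :: "'h \<Rightarrow> 'h"
  pos   :: "'h \<Rightarrow> bool"

definition wf_scgraph :: "'h scgraph \<Rightarrow> bool" where
  "wf_scgraph G \<longleftrightarrow> finite (hes G) \<and> bij_betw (rot G) (hes G) (hes G) \<and>
     (\<forall>h\<in>hes G. eswap G h \<in> hes G \<and> eswap G h \<noteq> h \<and> eswap G (eswap G h) = h \<and>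
                 pos G (eswap G h) = pos G h)"

text \<open>D is (isomorphic to) the medial diagram of G: the crossing of edge {h, eswap h}
has, in counterclockwise order, the ends k(h,True), k(h,False), k(eswap h,True),
k(eswap h,False), where (h,True) points to the corner between h and rot h and
(h,False) to the corner between the predecessor of h and h; corners are joined
along faces; for a positive edge the over-strand is the one through (h,True)
(so the A-smoothing connects across the edge), for a negative edge the one through
(h,False).\<close>

definition associated :: "'h scgraph \<Rightarrow> 'v diagram \<Rightarrow> bool" where
  "associated G D \<longleftrightarrow> wf_diagram D \<and> beads D = {} \<and>
     (\<exists>k. bij_betw k (hes G \<times> UNIV) (ends D) \<and>
        (\<forall>h\<in>hes G. \<exists>v j. v \<in> xings D \<and> j < 4 \<and>
            k (h,True) = (v,j) \<and> k (h,False) = (v,(j+1) mod 4) \<and>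
            k (eswap G h,True) = (v,(j+2) mod 4) \<and> k (eswap G h,False) = (v,(j+3) mod 4) \<and>
            (pos G h \<longleftrightarrow> even j)) \<and>
        (\<forall>h\<in>hes G. mate D (k (h,True)) = k (rot G h, False)))"

definition graphical :: "nat diagram \<Rightarrow> bool" where
  "graphical D \<longleftrightarrow> (\<exists>(G :: nat scgraph) D'. wf_scgraph G \<and> associated G D' \<and> vequiv D D')"

definition vcheckerboard :: "nat diagram \<Rightarrow> bool" where
  "vcheckerboard D \<longleftrightarrow> (\<exists>D'. vequiv D D' \<and> cb_colorable D')"

end

theory Submission
  imports Defs
begin

lemma vequiv_wf:
  assumes "vequiv D D'" "wf_diagram D"
  shows "wf_diagram D'"
  using assms(1) unfolding vequiv_def
  by (induction rule: equivclp_induct) (use assms(2) in \<open>auto simp: vstep_def\<close>)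

lemma mod4_cases: "(i::nat) < 4 \<Longrightarrow> i = 0 \<or> i = 1 \<or> i = 2 \<or> i = 3"
  by auto

lemma assoc_colorable:
  assumes G: "wf_scgraph G" and A: "associated G D"
  shows "cb_colorable D"
proof -
  have wf: "wf_diagram D" and nb: "beads D = {}" using A by (auto simp: associated_def)
  obtain k where kb: "bij_betw k (hes G \<times> UNIV) (ends D)"
    and kx: "\<forall>h\<in>hes G. \<exists>v j. v \<in> xings D \<and> j < 4 \<and>
            k (h,True) = (v,j) \<and> k (h,False) = (v,(j+1) mod 4) \<and>
            k (eswap G h,True) = (v,(j+2) mod 4) \<and> k (eswap G h,False) = (v,(j+3) mod 4) \<and>
            (pos G h \<longleftrightarrow> even j)"
    and km: "\<forall>h\<in>hes G. mate D (k (h,True)) = k (rot G h, False)"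
    using A unfolding associated_def by blast
  have rb: "bij_betw (rot G) (hes G) (hes G)" and es: "\<And>h. h \<in> hes G \<Longrightarrow> eswap G h \<in> hes G"
    using G by (auto simp: wf_scgraph_def)
  have ki: "inj_on k (hes G \<times> UNIV)" and ke: "k ` (hes G \<times> UNIV) = ends D"
    using kb by (auto simp: bij_betw_def)
  define C where "C = k ` (hes G \<times> {True})"
  have kin: "\<And>h b. h \<in> hes G \<Longrightarrow> k (h,b) \<in> ends D" using ke by blast
  have notC: "\<And>h. h \<in> hes G \<Longrightarrow> k (h,False) \<notin> C"
  proof
    fix h assume h: "h \<in> hes G" and "k (h,False) \<in> C"
    then obtain h' where h': "h' \<in> hes G" "k (h,False) = k (h',True)" unfolding C_def by auto
    then show False using inj_onD[OF ki h'(2)] h by auto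
  qed
  have inC: "\<And>h. h \<in> hes G \<Longrightarrow> k (h,True) \<in> C" unfolding C_def by auto
  have endsE: "\<exists>h b. h \<in> hes G \<and> e = k (h,b)" if "e \<in> ends D" for e
  proof -
    have "e \<in> k ` (hes G \<times> UNIV)" using that ke by simp
    then obtain x where x: "x \<in> hes G \<times> UNIV" "e = k x" by (rule imageE)
    obtain h b where "x = (h,b)" by (cases x)
    then show ?thesis using x by blast
  qed
  have c1: "C \<subseteq> ends D" unfolding C_def using ke by auto
  have c2: "\<forall>e\<in>ends D. e \<in> C \<longleftrightarrow> mate D e \<notin> C"
  proof
    fix e assume e: "e \<in> ends D"
    then obtain h b where h: "h \<in> hes G" and eq: "e = k (h,b)" using endsE by blast
    show "e \<in> C \<longleftrightarrow> mate D e \<notin> C"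
    proof (cases b)
      case True
      have "rot G h \<in> hes G" using rb h by (auto simp: bij_betw_def)
      then show ?thesis using km h eq True inC notC by auto
    next
      case False
      have "h \<in> rot G ` hes G" using rb h by (simp add: bij_betw_def)
      then obtain h0 where h0': "h0 \<in> hes G" "h = rot G h0" by (rule imageE)
      then have h0: "h0 \<in> hes G" "rot G h0 = h" by simp_all
      have "mate D (k (h0,True)) = e" using km h0 eq False by auto
      then have "mate D e = k (h0,True)" using wf kin[OF h0(1)] by (auto simp: wf_diagram_def)
      then show ?thesis using inC notC h0 h eq False by auto
    qed
  qed
  have alt: "\<And>v i. v \<in> xings D \<Longrightarrow> i < 4 \<Longrightarrow> (v,i) \<in> C \<longleftrightarrow> (v, (i+1) mod 4) \<notin> C"
  proof -
    fix v and i :: nat assume v: "v \<in> xings D" and i: "i < 4"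
    then have "(v,i) \<in> ends D" by (auto simp: ends_def)
    then obtain h b where h: "h \<in> hes G" and eq: "(v,i) = k (h,b)" using endsE by blast
    obtain w j where wj: "w \<in> xings D" "j < 4" "k (h,True) = (w,j)" "k (h,False) = (w,(j+1) mod 4)"
      "k (eswap G h,True) = (w,(j+2) mod 4)" using kx h by blast
    show "(v,i) \<in> C \<longleftrightarrow> (v, (i+1) mod 4) \<notin> C"
    proof (cases b)
      case True
      then have wv: "w = v" "j = i" using eq wj by auto
      have "(v,i) \<in> C" using inC[OF h] eq True by simp
      moreover have "(v, (i+1) mod 4) \<notin> C" using notC[OF h] wj(4) wv by simp
      ultimately show ?thesis by simp
    next
      case False
      then have wv: "w = v" "i = (j+1) mod 4" using eq wj by auto
      have m: "((j+1) mod 4 + 1) mod 4 = (j+2) mod 4" using mod_add_left_eq[of "j+1" 4 1] by simp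
      have "(v,i) \<notin> C" using notC[OF h] eq False by simp
      moreover have "(v, (i+1) mod 4) \<in> C" using inC[OF es[OF h]] wj(5) wv m by simp
      ultimately show ?thesis by simp
    qed
  qed
  have c3: "\<forall>v\<in>xings D. (\<forall>i<4. (v,i) \<in> C \<longleftrightarrow> even i) \<or> (\<forall>i<4. (v,i) \<in> C \<longleftrightarrow> odd i)"
  proof
    fix v assume v: "v \<in> xings D"
    have e1: "((0::nat)+1) mod 4 = 1" "((1::nat)+1) mod 4 = 2" "((2::nat)+1) mod 4 = 3" by simp_all
    have a0: "(v,0) \<in> C \<longleftrightarrow> (v,1) \<notin> C" using alt[OF v, of 0] unfolding e1 by simp
    have a1: "(v,1) \<in> C \<longleftrightarrow> (v,2) \<notin> C" using alt[OF v, of 1] unfolding e1 by simp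
    have a2: "(v,2) \<in> C \<longleftrightarrow> (v,3) \<notin> C" using alt[OF v, of 2] unfolding e1 by simp
    show "(\<forall>i<4. (v,i) \<in> C \<longleftrightarrow> even i) \<or> (\<forall>i<4. (v,i) \<in> C \<longleftrightarrow> odd i)"
    proof (cases "(v,0) \<in> C")
      case True
      have "\<forall>i<4. (v,i) \<in> C \<longleftrightarrow> even i"
      proof (intro allI impI)
        fix i :: nat assume "i < 4"
        then show "(v,i) \<in> C \<longleftrightarrow> even i"
          using mod4_cases[OF \<open>i < 4\<close>] True a0 a1 a2 by (elim disjE) simp_all
      qed
      then show ?thesis by blast
    next
      case False
      have "\<forall>i<4. (v,i) \<in> C \<longleftrightarrow> odd i"
      proof (intro allI impI)
        fix i :: nat assume "i < 4"
        then show "(v,i) \<in> C \<longleftrightarrow> odd i"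
          using mod4_cases[OF \<open>i < 4\<close>] False a0 a1 a2 by (elim disjE) simp_all
      qed
      then show ?thesis by blast
    qed
  qed
  have "cb_coloring D C" unfolding cb_coloring_def using c1 c2 c3 nb by simp
  then show ?thesis unfolding cb_colorable_def by blast
qed

lemma enc_eq: assumes "(r::nat) < 4" "s < 4" "4*a + r = 4*b + s" shows "a = b \<and> r = s"
proof -
  have "(4*a+r) div 4 = (4*b+s) div 4" "(4*a+r) mod 4 = (4*b+s) mod 4" using assms(3) by simp_all
  then show ?thesis using assms(1,2) by simp
qed

lemma m4c1: assumes "(x::nat) < 4" "y < 4" "(x + 1) mod 4 = (y + 1) mod 4" shows "x = y"
  using mod4_cases[OF assms(1)] mod4_cases[OF assms(2)] assms(3) by (elim disjE) simp_all

lemma m4c3: assumes "(x::nat) < 4" "y < 4" "(x + 3) mod 4 = (y + 3) mod 4" shows "x = y"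
  using mod4_cases[OF assms(1)] mod4_cases[OF assms(2)] assms(3) by (elim disjE) simp_all

lemma m4u: "(x::nat) < 4 \<Longrightarrow> ((x + 2) mod 4 + 1) mod 4 = (x + 3) mod 4"
  by (drule mod4_cases) (elim disjE; simp)

lemma m4s: "(x::nat) < 4 \<Longrightarrow> ((x + 3) mod 4 + 1) mod 4 = x"
  by (drule mod4_cases) (elim disjE; simp)

lemma col_facts:
  assumes C: "cb_coloring D C" and v: "v \<in> xings D" and i: "i < 4"
  shows "(v,(i+1) mod 4) \<in> C \<longleftrightarrow> (v,i) \<notin> C"
    and "(v,(i+2) mod 4) \<in> C \<longleftrightarrow> (v,i) \<in> C"
    and "(v,(i+3) mod 4) \<in> C \<longleftrightarrow> (v,i) \<notin> C"
proof -
  have "(\<forall>i<4. (v,i) \<in> C \<longleftrightarrow> even i) \<or> (\<forall>i<4. (v,i) \<in> C \<longleftrightarrow> odd i)"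
    using C v by (auto simp: cb_coloring_def)
  then show "(v,(i+1) mod 4) \<in> C \<longleftrightarrow> (v,i) \<notin> C"
    and "(v,(i+2) mod 4) \<in> C \<longleftrightarrow> (v,i) \<in> C"
    and "(v,(i+3) mod 4) \<in> C \<longleftrightarrow> (v,i) \<notin> C"
    using mod4_cases[OF i] by auto
qed

lemma finite_ends: "wf_diagram D \<Longrightarrow> finite (ends D)"
proof -
  assume "wf_diagram D"
  then have "finite ((xings D \<union> beads D) \<times> {..<4::nat})" by (auto simp: wf_diagram_def)
  moreover have "ends D \<subseteq> (xings D \<union> beads D) \<times> {..<4::nat}" by (auto simp: ends_def)
  ultimately show ?thesis by (rule finite_subset[rotated])
qed

lemma beadfree_assoc:
  fixes D :: "nat diagram"
  assumes wf: "wf_diagram D" and nb: "beads D = {}" and C: "cb_coloring D C"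
  shows "\<exists>G::nat scgraph. wf_scgraph G \<and> associated G D"
proof -
  have ends_iff: "e \<in> ends D \<longleftrightarrow> fst e \<in> xings D \<and> snd e < 4" for e
    using nb by (cases e) (auto simp: ends_def)
  have Cends: "C \<subseteq> ends D" and Cm: "\<And>e. e \<in> ends D \<Longrightarrow> e \<in> C \<longleftrightarrow> mate D e \<notin> C"
    using C by (auto simp: cb_coloring_def)
  have me: "\<And>e. e \<in> ends D \<Longrightarrow> mate D e \<in> ends D \<and> mate D (mate D e) = e"
    using wf by (auto simp: wf_diagram_def)
  define H where "H = (\<lambda>e. 4 * fst e + snd e) ` C"
  have H_iff: "n \<in> H \<longleftrightarrow> (n div 4, n mod 4) \<in> C" for n
  proof
    assume "n \<in> H"
    then obtain e where e: "e \<in> C" "n = 4 * fst e + snd e" unfolding H_def by blast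
    then have "snd e < 4" using Cends ends_iff by blast
    then have "(n div 4, n mod 4) = e" using e(2) by (cases e) auto
    then show "(n div 4, n mod 4) \<in> C" using e by simp
  next
    assume "(n div 4, n mod 4) \<in> C"
    then have "4 * fst (n div 4, n mod 4) + snd (n div 4, n mod 4) \<in> H" unfolding H_def by blast
    then show "n \<in> H" by simp
  qed
  have Hx: "n div 4 \<in> xings D" if "n \<in> H" for n using that H_iff Cends ends_iff by force
  have nrec: "(n::nat) = 4 * (n div 4) + n mod 4" for n by simp
  define es where "es = (\<lambda>n::nat. 4 * (n div 4) + (n mod 4 + 2) mod 4)"
  define rt where "rt = (\<lambda>n::nat. 4 * fst (mate D (n div 4, n mod 4)) + (snd (mate D (n div 4, n mod 4)) + 3) mod 4)"
  define ps where "ps = (\<lambda>n::nat. even (n mod 4))"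
  define G where "G = \<lparr>hes = H, eswap = es, rot = rt, pos = ps\<rparr>"
  define k where "k = (\<lambda>(n::nat,b::bool). if b then (n div 4, n mod 4) else (n div 4, (n mod 4 + 1) mod 4))"
  have fH: "finite H" unfolding H_def using finite_subset[OF Cends finite_ends[OF wf]] by blast
  have rtH: "rt n \<in> H" if n: "n \<in> H" for n
  proof -
    let ?e = "mate D (n div 4, n mod 4)"
    have "(n div 4, n mod 4) \<in> C" using n H_iff by blast
    then have e: "?e \<in> ends D" "?e \<notin> C" using Cends Cm me by blast+
    then have "(fst ?e, (snd ?e + 3) mod 4) \<in> C" using col_facts(3)[OF C, of "fst ?e" "snd ?e"] ends_iff by auto
    then show ?thesis unfolding H_iff rt_def by simp
  qed
  have rt_inj: "inj_on rt H"
  proof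
    fix n1 n2 assume n1: "n1 \<in> H" and n2: "n2 \<in> H" and eq: "rt n1 = rt n2"
    let ?e1 = "mate D (n1 div 4, n1 mod 4)" and ?e2 = "mate D (n2 div 4, n2 mod 4)"
    have d1: "(n1 div 4, n1 mod 4) \<in> ends D" using n1 H_iff Cends by blast
    have d2: "(n2 div 4, n2 mod 4) \<in> ends D" using n2 H_iff Cends by blast
    have s1: "snd ?e1 < 4" using me[OF d1] ends_iff by blast
    have s2: "snd ?e2 < 4" using me[OF d2] ends_iff by blast
    have "fst ?e1 = fst ?e2" "(snd ?e1 + 3) mod 4 = (snd ?e2 + 3) mod 4"
      using enc_eq[OF _ _ eq[unfolded rt_def]] by simp_all
    moreover have "snd ?e1 = snd ?e2" using m4c3[OF s1 s2 calculation(2)] .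
    ultimately have "?e1 = ?e2" by (simp add: prod_eq_iff)
    then have "(n1 div 4, n1 mod 4) = (n2 div 4, n2 mod 4)" using me[OF d1] me[OF d2] by metis
    then show "n1 = n2" by (metis nrec prod.inject)
  qed
  have rt_bij: "bij_betw rt H H"
    using endo_inj_surj[OF fH _ rt_inj] rtH rt_inj by (auto simp: bij_betw_def)
  have esH: "es n \<in> H" if n: "n \<in> H" for n
  proof -
    have "(n div 4, n mod 4) \<in> C" using n H_iff by blast
    then have "(n div 4, (n mod 4 + 2) mod 4) \<in> C" using col_facts(2)[OF C Hx[OF n], of "n mod 4"] by simp
    then show ?thesis unfolding H_iff es_def by simp
  qed
  have es_prop: "es n \<noteq> n \<and> es (es n) = n \<and> ps (es n) = ps n" for n
  proof -
    have r: "n mod 4 < 4" by simp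
    have e1: "es n div 4 = n div 4" "es n mod 4 = (n mod 4 + 2) mod 4" unfolding es_def by simp_all
    have e2: "es (es n) = 4 * (n div 4) + ((n mod 4 + 2) mod 4 + 2) mod 4"
      using es_def e1 by simp
    have a1: "((n mod 4 + 2) mod 4 + 2) mod 4 = n mod 4" "(n mod 4 + 2) mod 4 \<noteq> n mod 4"
      "even ((n mod 4 + 2) mod 4) = even (n mod 4)"
      using mod4_cases[OF r] by (elim disjE; simp)+
    have "es n \<noteq> n" using e1(2) a1(2) by metis
    moreover have "es (es n) = n" using e2 a1(1) nrec[of n] by simp
    moreover have "ps (es n) = ps n" unfolding ps_def e1(2) a1(3) ..
    ultimately show ?thesis by blast
  qed
  have wfG: "wf_scgraph G" unfolding wf_scgraph_def G_def using fH rt_bij esH es_prop by simp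
  have k_in: "k x \<in> ends D" if "x \<in> H \<times> UNIV" for x
    using that Hx by (cases x) (auto simp: k_def ends_iff)
  have k_inj: "inj_on k (H \<times> UNIV)"
  proof
    fix x y assume x: "x \<in> H \<times> UNIV" and y: "y \<in> H \<times> UNIV" and eq: "k x = k y"
    obtain n1 b1 n2 b2 where xy: "x = (n1,b1)" "y = (n2,b2)" "n1 \<in> H" "n2 \<in> H"
      using x y by auto
    have c1: "(n1 div 4, n1 mod 4) \<in> C" "(n2 div 4, n2 mod 4) \<in> C" using xy H_iff by auto
    have c2: "(n1 div 4, (n1 mod 4 + 1) mod 4) \<notin> C" "(n2 div 4, (n2 mod 4 + 1) mod 4) \<notin> C"
      using c1 col_facts(1)[OF C Hx] xy by auto
    have m1: "n1 mod 4 < 4" "n2 mod 4 < 4" by auto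
    show "x = y"
    proof (cases b1; cases b2)
      assume "b1" "b2" then show ?thesis using eq xy by (auto simp: k_def) (metis nrec)
    next
      assume "b1" "\<not> b2" then show ?thesis using eq xy c1 c2 by (auto simp: k_def)
    next
      assume "\<not> b1" "b2" then show ?thesis using eq xy c1 c2 by (auto simp: k_def)
    next
      assume "\<not> b1" "\<not> b2"
      then have "n1 div 4 = n2 div 4" "(n1 mod 4 + 1) mod 4 = (n2 mod 4 + 1) mod 4"
        using eq xy by (auto simp: k_def)
      moreover then have "n1 mod 4 = n2 mod 4" using m4c1[OF m1] by blast
      ultimately have "n1 = n2" by (metis nrec)
      then show ?thesis using xy \<open>\<not> b1\<close> \<open>\<not> b2\<close> by simp
    qed
  qed
  have k_surj: "ends D \<subseteq> k ` (H \<times> UNIV)"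
  proof
    fix e assume e: "e \<in> ends D"
    obtain v i where vi: "e = (v,i)" by (cases e)
    have v: "v \<in> xings D" and i: "i < 4" using e vi ends_iff by auto
    show "e \<in> k ` (H \<times> UNIV)"
    proof (cases "e \<in> C")
      case True
      have "4*v+i \<in> H" using True vi i by (simp add: H_iff)
      moreover have "k (4*v+i, True) = e" using vi i by (simp add: k_def)
      ultimately show ?thesis by force
    next
      case False
      have "(v, (i+3) mod 4) \<in> C" using col_facts(3)[OF C v i] False vi by simp
      then have "4*v+(i+3) mod 4 \<in> H" by (simp add: H_iff)
      moreover have "k (4*v+(i+3) mod 4, False) = e" using vi i m4s[OF i] by (simp add: k_def)
      ultimately show ?thesis by force
    qed
  qed
  have k_bij: "bij_betw k (hes G \<times> UNIV) (ends D)"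
    unfolding bij_betw_def G_def using k_inj k_surj k_in by auto
  have kx: "\<forall>h\<in>hes G. \<exists>v j. v \<in> xings D \<and> j < 4 \<and>
            k (h,True) = (v,j) \<and> k (h,False) = (v,(j+1) mod 4) \<and>
            k (eswap G h,True) = (v,(j+2) mod 4) \<and> k (eswap G h,False) = (v,(j+3) mod 4) \<and>
            (pos G h \<longleftrightarrow> even j)"
  proof
    fix h assume h: "h \<in> hes G"
    have m: "h mod 4 < 4" by simp
    show "\<exists>v j. v \<in> xings D \<and> j < 4 \<and>
            k (h,True) = (v,j) \<and> k (h,False) = (v,(j+1) mod 4) \<and>
            k (eswap G h,True) = (v,(j+2) mod 4) \<and> k (eswap G h,False) = (v,(j+3) mod 4) \<and>
            (pos G h \<longleftrightarrow> even j)"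
    proof (intro exI conjI)
      have hH: "h \<in> H" using h by (simp add: G_def)
      show "h div 4 \<in> xings D" using Hx[OF hH] .
      show "h mod 4 < 4" by simp
      show "k (h,True) = (h div 4, h mod 4)" "k (h,False) = (h div 4, (h mod 4+1) mod 4)" by (simp_all add: k_def)
      have e1: "eswap G h div 4 = h div 4" "eswap G h mod 4 = (h mod 4 + 2) mod 4" by (simp_all add: G_def es_def)
      show "k (eswap G h,True) = (h div 4, (h mod 4+2) mod 4)" unfolding k_def using e1 by simp
      have "k (eswap G h,False) = (h div 4, ((h mod 4+2) mod 4 + 1) mod 4)" unfolding k_def using e1 by simp
      also have "((h mod 4+2) mod 4 + 1) mod 4 = (h mod 4 + 3) mod 4" using m4u[OF m] .
      finally show "k (eswap G h,False) = (h div 4, (h mod 4 + 3) mod 4)" .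
      show "pos G h \<longleftrightarrow> even (h mod 4)" by (simp add: G_def ps_def)
    qed
  qed
  have km: "\<forall>h\<in>hes G. mate D (k (h,True)) = k (rot G h, False)"
  proof
    fix h assume h: "h \<in> hes G"
    let ?e = "mate D (h div 4, h mod 4)"
    have "(h div 4, h mod 4) \<in> ends D" using h H_iff Cends unfolding G_def by auto
    then have s: "snd ?e < 4" using me ends_iff by blast
    have "((snd ?e + 3) mod 4 + 1) mod 4 = snd ?e" using m4s[OF s] .
    then show "mate D (k (h,True)) = k (rot G h, False)"
      unfolding G_def k_def rt_def by simp
  qed
  have "associated G D" unfolding associated_def
  proof (intro conjI exI[of _ k])
    show "wf_diagram D" by (rule wf)
    show "beads D = {}" by (rule nb)
    show "bij_betw k (hes G \<times> UNIV) (ends D)" by (rule k_bij)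
  qed (rule kx, rule km)
  then show ?thesis using wfG by blast
qed

lemma bead_remove_A:
  fixes D :: "nat diagram"
  assumes wf: "wf_diagram D" and C: "cb_coloring D C" and b: "b \<in> beads D"
    and nl: "mate D (b,0) \<noteq> (b,1)"
  shows "\<exists>D' C'. vequiv D D' \<and> wf_diagram D' \<and> cb_coloring D' C' \<and> beads D' = beads D - {b}
                 \<and> xings D' \<supseteq> xings D"
proof -
  have me: "\<And>e. e \<in> ends D \<Longrightarrow> mate D e \<in> ends D \<and> mate D e \<noteq> e \<and> mate D (mate D e) = e"
    using wf by (auto simp: wf_diagram_def)
  have bx: "b \<notin> xings D" using wf b by (auto simp: wf_diagram_def)
  have b0: "(b,0) \<in> ends D" and b1: "(b,1) \<in> ends D" using b by (auto simp: ends_def)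
  define p where "p = mate D (b,0)"
  define q where "q = mate D (b,1)"
  have pE: "p \<in> ends D" "mate D p = (b,0)" using me[OF b0] p_def by auto
  have qE: "q \<in> ends D" "mate D q = (b,1)" using me[OF b1] q_def by auto
  have p0: "p \<noteq> (b,0)" "p \<noteq> (b,1)" using me[OF b0] nl p_def by auto
  have q1: "q \<noteq> (b,1)" using me[OF b1] q_def by auto
  have q0: "q \<noteq> (b,0)" using qE pE p0 by (metis me[OF b0] p_def)
  have pq: "p \<noteq> q" using pE qE by auto
  define D0 where "D0 = D\<lparr>beads := beads D - {b}, mate := (\<lambda>e. if e = p then q else if e = q then p else mate D e)\<rparr>"
  have ends0: "ends D0 = ends D - {(b,0),(b,1)}"
    using bx by (auto simp: ends_def D0_def)
  have oth: "mate D e \<in> ends D0" if "e \<in> ends D0" "e \<noteq> p" "e \<noteq> q" for e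
  proof -
    have e: "e \<in> ends D" using that ends0 by auto
    have "mate D e \<noteq> (b,0)" using that(2) p_def me[OF e] by metis
    moreover have "mate D e \<noteq> (b,1)" using that(3) q_def me[OF e] by metis
    ultimately show ?thesis using me[OF e] ends0 by auto
  qed
  have oth2: "mate D e \<noteq> p \<and> mate D e \<noteq> q" if "e \<in> ends D0" for e
  proof -
    have e: "e \<in> ends D" "e \<noteq> (b,0)" "e \<noteq> (b,1)" using that ends0 by auto
    then show ?thesis using me[OF e(1)] pE qE by metis
  qed
  have wf0: "wf_diagram D0"
    unfolding wf_diagram_def
  proof (intro conjI ballI)
    show "finite (xings D0)" "finite (beads D0)" "xings D0 \<inter> beads D0 = {}"
      using wf by (auto simp: wf_diagram_def D0_def)
  next
    fix e assume e: "e \<in> ends D0"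
    show "mate D0 e \<in> ends D0"
      using e oth pE qE p0 q0 q1 ends0 by (auto simp: D0_def)
    have e': "e \<in> ends D" using e ends0 by auto
    show "mate D0 e \<noteq> e" using pq me[OF e'] by (simp add: D0_def)
    show "mate D0 (mate D0 e) = e"
    proof (cases "e = p \<or> e = q")
      case True then show ?thesis using pq by (auto simp: D0_def)
    next
      case False
      then have "mate D0 e = mate D e" by (simp add: D0_def)
      then show ?thesis using oth2[OF e] me[OF e'] by (simp add: D0_def)
    qed
  qed
  have ba: "bead_add D0 D"
    unfolding bead_add_def
  proof (intro exI conjI)
    show "b \<notin> xings D0 \<union> beads D0" using bx by (simp add: D0_def)
    show "p \<in> ends D0" using pE p0 ends0 by auto
    show "xings D = xings D0" by (simp add: D0_def)
    show "beads D = insert b (beads D0)" using b by (auto simp: D0_def)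
    show "mate D p = (b,0)" "mate D (b,0) = p" using pE p_def by auto
    show "mate D (b,1) = mate D0 p" by (simp add: D0_def q_def)
    show "mate D (mate D0 p) = (b,1)" using qE by (simp add: D0_def)
    show "\<forall>e\<in>ends D0. e \<noteq> p \<and> e \<noteq> mate D0 p \<longrightarrow> mate D e = mate D0 e"
      by (auto simp: D0_def)
  qed
  then have "vstep D0 D" using wf wf0 by (simp add: vstep_def)
  then have eq: "vequiv D D0" unfolding vequiv_def by blast
  define C0 where "C0 = C - {(b,0),(b,1)}"
  have Cends: "C \<subseteq> ends D" and Cm: "\<And>e. e \<in> ends D \<Longrightarrow> e \<in> C \<longleftrightarrow> mate D e \<notin> C"
    and Cb: "(b,0) \<in> C \<longleftrightarrow> (b,1) \<notin> C"
    using C b by (auto simp: cb_coloring_def)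
  have col0: "cb_coloring D0 C0"
    unfolding cb_coloring_def
  proof (intro conjI)
    show "C0 \<subseteq> ends D0" using Cends ends0 by (auto simp: C0_def)
  next
    show "\<forall>e\<in>ends D0. e \<in> C0 \<longleftrightarrow> mate D0 e \<notin> C0"
    proof
    fix e assume e: "e \<in> ends D0"
    then have e': "e \<in> ends D" "e \<noteq> (b,0)" "e \<noteq> (b,1)" using ends0 by auto
    show "e \<in> C0 \<longleftrightarrow> mate D0 e \<notin> C0"
    proof (cases "e = p \<or> e = q")
      case True
      have "p \<in> C \<longleftrightarrow> q \<notin> C" using Cm[OF pE(1)] Cm[OF qE(1)] pE qE Cb by auto
      then show ?thesis using True pq p0 q0 q1 by (auto simp: D0_def C0_def)
    next
      case False
      then have "mate D0 e = mate D e" by (simp add: D0_def)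
      moreover have "mate D e \<in> ends D0" using oth e False by auto
      ultimately show ?thesis using Cm[OF e'(1)] e' ends0 by (auto simp: C0_def)
    qed
    qed
  next
    show "\<forall>v\<in>xings D0. (\<forall>i<4. (v,i) \<in> C0 \<longleftrightarrow> even i) \<or> (\<forall>i<4. (v,i) \<in> C0 \<longleftrightarrow> odd i)"
    proof
      fix v assume "v \<in> xings D0"
      then have v: "v \<in> xings D" "v \<noteq> b" using bx by (auto simp: D0_def)
      then have "\<forall>i. (v,i) \<in> C0 \<longleftrightarrow> (v,i) \<in> C" by (auto simp: C0_def)
      then show "(\<forall>i<4. (v,i) \<in> C0 \<longleftrightarrow> even i) \<or> (\<forall>i<4. (v,i) \<in> C0 \<longleftrightarrow> odd i)"
        using C v by (simp add: cb_coloring_def)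
    qed
    show "\<forall>v\<in>beads D0. (v,0) \<in> C0 \<longleftrightarrow> (v,1) \<notin> C0"
      using C by (simp add: cb_coloring_def D0_def C0_def)
  qed
  show ?thesis using eq wf0 col0 by (intro exI[of _ D0] exI[of _ C0]) (auto simp: D0_def)
qed

lemma bead_remove_B:
  fixes D :: "nat diagram"
  assumes wf: "wf_diagram D" and C: "cb_coloring D C" and b: "b \<in> beads D"
    and lp: "mate D (b,0) = (b,1)"
  shows "\<exists>D' C'. vequiv D D' \<and> wf_diagram D' \<and> cb_coloring D' C' \<and> beads D' = beads D - {b}"
proof -
  have me: "\<And>e. e \<in> ends D \<Longrightarrow> mate D e \<in> ends D \<and> mate D e \<noteq> e \<and> mate D (mate D e) = e"
    using wf by (auto simp: wf_diagram_def)
  have bx: "b \<notin> xings D" using wf b by (auto simp: wf_diagram_def)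
  have b0: "(b,0) \<in> ends D" and b1: "(b,1) \<in> ends D" using b by (auto simp: ends_def)
  have lp1: "mate D (b,1) = (b,0)" using me[OF b0] lp by simp
  have wfx: "finite (xings D)" "finite (beads D)" "xings D \<inter> beads D = {}"
    using wf unfolding wf_diagram_def by blast+
  have fin: "finite (xings D \<union> beads D)" using wfx by simp
  obtain c where c: "c \<notin> xings D \<union> beads D" using ex_new_if_finite[OF infinite_UNIV_nat fin] by blast
  have bc: "b \<noteq> c" using c b by auto
  have fstE: "fst e \<in> xings D \<union> beads D" if "e \<in> ends D" for e using that by (auto simp: ends_def)
  have bE: "{e \<in> ends D. fst e = b} = {(b,0),(b,1)}" using b bx by (auto simp: ends_def)
  define M where "M = (\<lambda>e. if e = (c,0) then (c,1) else if e = (c,1) then (c,0)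
       else if e = (c,2) then (c,3) else if e = (c,3) then (c,2) else mate D e)"
  define D1 where "D1 = D\<lparr>xings := insert c (xings D), beads := beads D - {b}, mate := M\<rparr>"
  have ends1: "ends D1 = (ends D - {(b,0),(b,1)}) \<union> {c} \<times> {..<4}"
    using bx bc b by (auto simp: ends_def D1_def)
  have oth: "mate D e \<in> ends D \<and> fst (mate D e) \<noteq> b \<and> fst (mate D e) \<noteq> c \<and> fst e \<noteq> c \<and> M e = mate D e"
    if "e \<in> ends D" "fst e \<noteq> b" for e
  proof -
    have "mate D e \<noteq> (b,0)" using that me[OF that(1)] lp by (metis fst_conv)
    moreover have "mate D e \<noteq> (b,1)" using that me[OF that(1)] lp1 by (metis fst_conv)
    moreover have "mate D e \<in> ends D" using me[OF that(1)] by simp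
    ultimately have "fst (mate D e) \<noteq> b" using bE by (metis (mono_tags, lifting) insertE mem_Collect_eq prod.collapse singletonD)
    moreover have "fst (mate D e) \<noteq> c" "fst e \<noteq> c" using fstE[OF that(1)] fstE[OF \<open>mate D e \<in> ends D\<close>] c by auto
    ultimately show ?thesis using \<open>mate D e \<in> ends D\<close> unfolding M_def by auto
  qed
  have endsD_b: "e \<in> ends D \<Longrightarrow> fst e = b \<longleftrightarrow> e = (b,0) \<or> e = (b,1)" for e using bE by auto
  have wf1: "wf_diagram D1"
    unfolding wf_diagram_def
  proof (intro conjI ballI)
    show "finite (xings D1)" "finite (beads D1)" "xings D1 \<inter> beads D1 = {}"
      using wfx c by (auto simp: D1_def)
  next
    fix e assume e: "e \<in> ends D1"
    have "mate D1 e \<in> ends D1 \<and> mate D1 e \<noteq> e \<and> mate D1 (mate D1 e) = e"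
    proof (cases "fst e = c")
      case True
      obtain i where ei: "e = (c,i)" and i: "i < 4"
      proof -
        have "e \<notin> ends D" using fstE True c by blast
        then have "e \<in> {c} \<times> {..<4}" using e ends1 by blast
        then show ?thesis using that by blast
      qed
      have cE: "(c,0) \<in> ends D1" "(c,1) \<in> ends D1" "(c,2) \<in> ends D1" "(c,3) \<in> ends D1"
        by (simp_all add: ends1)
      show ?thesis using mod4_cases[OF i] cE unfolding ei by (elim disjE) (simp_all add: D1_def M_def)
    next
      case False
      have "e \<notin> {c} \<times> {..<4}" using False by auto
      then have "e \<in> ends D - {(b,0),(b,1)}" using e unfolding ends1 by blast
      then have e0: "e \<in> ends D" "e \<noteq> (b,0)" "e \<noteq> (b,1)" by blast+
      then have e': "e \<in> ends D" "fst e \<noteq> b" using endsD_b[OF e0(1)] by blast+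
      have m': "mate D e \<in> ends D" "fst (mate D e) \<noteq> b" using oth[OF e'] by blast+
      have "mate D1 e = M e" by (simp add: D1_def)
      also have "\<dots> = mate D e" using oth[OF e'] by blast
      finally have o: "mate D1 e = mate D e" .
      have "mate D1 (mate D e) = M (mate D e)" by (simp add: D1_def)
      also have "\<dots> = mate D (mate D e)" using oth[OF m'] by blast
      finally have o2: "mate D1 (mate D e) = mate D (mate D e)" .
      have "mate D e \<noteq> (b,0)" "mate D e \<noteq> (b,1)" using m'(2) by auto
      then have "mate D e \<in> ends D - {(b,0),(b,1)}" using m'(1) by blast
      then have "mate D e \<in> ends D1" unfolding ends1 by blast
      then show ?thesis unfolding o o2 using me[OF e'(1)] by blast
    qed
    then show "mate D1 e \<in> ends D1" "mate D1 e \<noteq> e" "mate D1 (mate D1 e) = e" by auto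
  qed
  define sg where "sg = (\<lambda>e. if e = (b,0) then (c, ((0::nat)+2) mod 4) else if e = (b,1) then (c, ((0::nat)+3) mod 4) else e)"
  define I where "I = (\<lambda>e. if e = (c,(0::nat)) then (c, ((0::nat)+1) mod 4) else if e = (c, ((0::nat)+1) mod 4) then (c,0) else e)"
  have s5: "\<forall>e\<in>ends D. fst e \<notin> {b} \<longrightarrow> mate D1 e = (if fst (mate D e) \<in> {b} then sg (mate D e) else mate D e)"
    using oth by (auto simp: D1_def)
  have s6: "\<forall>e\<in>ends D. fst e \<in> {b} \<longrightarrow> mate D1 (sg e) = (if fst (mate D e) \<in> {b} then sg (mate D e) else mate D e)"
  proof (intro ballI impI)
    fix e assume ee: "e \<in> ends D" "fst e \<in> {b}"
    then have "e = (b,0) \<or> e = (b,1)" using endsD_b[OF ee(1)] by simp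
    then show "mate D1 (sg e) = (if fst (mate D e) \<in> {b} then sg (mate D e) else mate D e)"
      using lp lp1 bc by (auto simp: D1_def M_def sg_def)
  qed
  have bE': "{e \<in> ends D. fst e \<in> {b}} = {(b,0),(b,1)}" using bE by simp
  have sgim: "sg ` {e \<in> ends D. fst e \<in> {b}} = {(c,2),(c,3)}" unfolding bE' sg_def by auto
  have s7: "\<forall>e\<in>({c} \<times> {..<4}) - sg ` {e \<in> ends D. fst e \<in> {b}}. mate D1 e = I e"
    unfolding sgim by (auto simp: D1_def M_def I_def dest!: mod4_cases)
  have sr: "subst_rel D {b} {c} sg I D1"
    unfolding subst_rel_def Let_def
    using s5 s6 s7 b c by (auto simp: D1_def)
  have r1: "reid1 D D1"
    unfolding reid1_def
    apply (rule exI[of _ b], rule exI[of _ c], rule exI[of _ 0])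
    using b sr unfolding sg_def I_def by simp
  then have "vstep D D1" using wf wf1 by (simp add: vstep_def)
  then have eq: "vequiv D D1" unfolding vequiv_def by blast
  define C1 where "C1 = (C - {(b,0),(b,1)}) \<union> {(c,0),(c,2)}"
  have Cends: "C \<subseteq> ends D" and Cm: "\<And>e. e \<in> ends D \<Longrightarrow> e \<in> C \<longleftrightarrow> mate D e \<notin> C"
    using C by (auto simp: cb_coloring_def)
  have cnC: "(c,i) \<notin> C" for i using Cends fstE c by force
  have col1: "cb_coloring D1 C1"
    unfolding cb_coloring_def
  proof (intro conjI)
    show "C1 \<subseteq> ends D1" using Cends ends1 by (auto simp: C1_def)
  next
    show "\<forall>e\<in>ends D1. e \<in> C1 \<longleftrightarrow> mate D1 e \<notin> C1"
    proof
      fix e assume e: "e \<in> ends D1"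
      show "e \<in> C1 \<longleftrightarrow> mate D1 e \<notin> C1"
      proof (cases "fst e = c")
        case True
        obtain i where ei: "e = (c,i)" and i: "i < 4"
      proof -
        have "e \<notin> ends D" using fstE True c by blast
        then have "e \<in> {c} \<times> {..<4}" using e ends1 by blast
        then show ?thesis using that by blast
      qed
        show ?thesis using mod4_cases[OF i] bc cnC unfolding ei by (elim disjE) (simp_all add: D1_def M_def C1_def)
      next
        case False
        have "e \<notin> {c} \<times> {..<4}" using False by auto
        then have "e \<in> ends D - {(b,0),(b,1)}" using e unfolding ends1 by blast
        then have e0: "e \<in> ends D" "e \<noteq> (b,0)" "e \<noteq> (b,1)" by blast+
        then have e': "e \<in> ends D" "fst e \<noteq> b" using endsD_b[OF e0(1)] by blast+
        have m': "mate D e \<in> ends D" "fst (mate D e) \<noteq> b" "fst (mate D e) \<noteq> c" using oth[OF e'] by blast+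
        have "mate D1 e = M e" by (simp add: D1_def)
        also have "\<dots> = mate D e" using oth[OF e'] by blast
        finally have o: "mate D1 e = mate D e" .
        have "e \<in> C1 \<longleftrightarrow> e \<in> C" using e' False unfolding C1_def by auto
        moreover have "mate D e \<in> C1 \<longleftrightarrow> mate D e \<in> C" using m' unfolding C1_def by auto
        ultimately show ?thesis using o Cm[OF e'(1)] by simp
      qed
    qed
  next
    show "\<forall>v\<in>xings D1. (\<forall>i<4. (v,i) \<in> C1 \<longleftrightarrow> even i) \<or> (\<forall>i<4. (v,i) \<in> C1 \<longleftrightarrow> odd i)"
    proof
      fix v assume v1: "v \<in> xings D1"
      show "(\<forall>i<4. (v,i) \<in> C1 \<longleftrightarrow> even i) \<or> (\<forall>i<4. (v,i) \<in> C1 \<longleftrightarrow> odd i)"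
      proof (cases "v = c")
        case True
        then show ?thesis using bc cnC by (auto simp: C1_def dest!: mod4_cases)
      next
        case False
        then have v: "v \<in> xings D" "v \<noteq> b" "v \<noteq> c" using v1 bx by (auto simp: D1_def)
        then have "\<forall>i. (v,i) \<in> C1 \<longleftrightarrow> (v,i) \<in> C" by (auto simp: C1_def)
        then show ?thesis using C v by (simp add: cb_coloring_def)
      qed
    qed
  next
    show "\<forall>v\<in>beads D1. (v,0) \<in> C1 \<longleftrightarrow> (v,1) \<notin> C1"
    proof
      fix v assume v1: "v \<in> beads D1"
      then have v: "v \<in> beads D" "v \<noteq> b" "v \<noteq> c" using c by (auto simp: D1_def)
      then have "\<forall>i. (v,i) \<in> C1 \<longleftrightarrow> (v,i) \<in> C" by (auto simp: C1_def)
      then show "(v,0) \<in> C1 \<longleftrightarrow> (v,1) \<notin> C1" using C v by (simp add: cb_coloring_def)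
    qed
  qed
  show ?thesis using eq wf1 col1 by (intro exI[of _ D1] exI[of _ C1]) (auto simp: D1_def)
qed

lemma reduce_beads:
  fixes D :: "nat diagram"
  assumes "wf_diagram D" "cb_coloring D C"
  shows "\<exists>D' C'. vequiv D D' \<and> wf_diagram D' \<and> cb_coloring D' C' \<and> beads D' = {}"
  using assms
proof (induction "card (beads D)" arbitrary: D C rule: less_induct)
  case less
  show ?case
  proof (cases "beads D = {}")
    case True
    moreover have "vequiv D D" by (simp add: vequiv_def)
    ultimately show ?thesis using less.prems by blast
  next
    case False
    then obtain b where b: "b \<in> beads D" by blast
    have fb: "finite (beads D)" using less.prems(1) by (simp add: wf_diagram_def)
    obtain D1 C1 where D1: "vequiv D D1" "wf_diagram D1" "cb_coloring D1 C1" "beads D1 = beads D - {b}"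
    proof (cases "mate D (b,0) = (b,1)")
      case True
      then show ?thesis using bead_remove_B[OF less.prems b] that by blast
    next
      case False
      then show ?thesis using bead_remove_A[OF less.prems b] that by blast
    qed
    have "card (beads D1) < card (beads D)" unfolding D1(4) by (rule card_Diff1_less[OF fb b])
    from less.hyps[OF this D1(2) D1(3)] obtain D2 C2 where
      D2: "vequiv D1 D2" "wf_diagram D2" "cb_coloring D2 C2" "beads D2 = {}"
      by blast
    have "vequiv D D2" using equivclp_trans[OF D1(1)[unfolded vequiv_def] D2(1)[unfolded vequiv_def]]
      by (simp add: vequiv_def)
    then show ?thesis using D2 by blast
  qed
qed

theorem theorem3p3:
  fixes D :: "nat diagram"
  assumes "wf_diagram D"
  shows "graphical D \<longleftrightarrow> vcheckerboard D"
proof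
  assume "graphical D"
  then obtain G :: "nat scgraph" and D' where "wf_scgraph G" "associated G D'" "vequiv D D'"
    unfolding graphical_def by blast
  then show "vcheckerboard D" unfolding vcheckerboard_def using assoc_colorable by blast
next
  assume "vcheckerboard D"
  then obtain D' C where D': "vequiv D D'" "cb_coloring D' C"
    unfolding vcheckerboard_def cb_colorable_def by blast
  have wf': "wf_diagram D'" using vequiv_wf[OF D'(1) assms] .
  obtain D2 C2 where D2: "vequiv D' D2" "wf_diagram D2" "cb_coloring D2 C2" "beads D2 = {}"
    using reduce_beads[OF wf' D'(2)] by blast
  obtain G :: "nat scgraph" where "wf_scgraph G" "associated G D2"
    using beadfree_assoc[OF D2(2) D2(4) D2(3)] by blast
  moreover have "vequiv D D2" using equivclp_trans[OF D'(1)[unfolded vequiv_def] D2(1)[unfolded vequiv_def]]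
      by (simp add: vequiv_def)
  ultimately show "graphical D" unfolding graphical_def by blast
qed

end
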